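(* Let $X$ be a CAT(0) Euclidean polygonal complex and let $x,y,z\in X$. Then the geodesic triangle $\triangle(x,y,z)$ is (homeomorphic to) a spiky triangle.
   Context: A CAT(0) Euclidean polygonal complex is a 2-dimensional polygonal complex whose cells are convex Euclidean polygons, with its induced length metric, assumed CAT(0). $\overline{ab}$ denotes the unique geodesic between $a,b$; $\triangle(x,y,z)=\overline{xy}\cup\overline{yz}\cup\overline{zx}$. A spiky triangle is the topological space obtained by gluing a possibly degenerate interval at one endpoint to each of the three vertices of the boundary of a possibly degenerate Euclidean triangle. *)

theory Defs
  imports "HOL-Analysis.Analysis"
begin

definition geodesic_path :: "'a::metric_space set \<Rightarrow> (real \<Rightarrow> 'a) \<Rightarrow> 'a \<Rightarrow> 'a \<Rightarrow> bool" where
  "geodesic_path X \<gamma> a b \<longleftrightarrow>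
     \<gamma> 0 = a \<and> \<gamma> (dist a b) = b \<and> \<gamma> ` {0..dist a b} \<subseteq> X \<and>
     (\<forall>s\<in>{0..dist a b}. \<forall>t\<in>{0..dist a b}. dist (\<gamma> s) (\<gamma> t) = \<bar>s - t\<bar>)"

definition cmp_ineq :: "(real \<Rightarrow> 'a::metric_space) \<Rightarrow> real \<Rightarrow> real \<times> real \<Rightarrow> real \<times> real
     \<Rightarrow> (real \<Rightarrow> 'a) \<Rightarrow> real \<Rightarrow> real \<times> real \<Rightarrow> real \<times> real \<Rightarrow> bool" where
  "cmp_ineq \<gamma> L A B \<delta> M C D \<longleftrightarrow>
     (\<forall>s\<in>{0..1}. \<forall>t\<in>{0..1}.
        dist (\<gamma> (s * L)) (\<delta> (t * M)) \<le> dist (A + s *\<^sub>R (B - A)) (C + t *\<^sub>R (D - C)))"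

definition CAT0 :: "'a::metric_space set \<Rightarrow> bool" where
  "CAT0 X \<longleftrightarrow>
     (\<forall>x\<in>X. \<forall>y\<in>X. \<exists>\<gamma>. geodesic_path X \<gamma> x y) \<and>
     (\<forall>x\<in>X. \<forall>y\<in>X. \<forall>z\<in>X. \<forall>\<gamma>1 \<gamma>2 \<gamma>3.
        geodesic_path X \<gamma>1 x y \<and> geodesic_path X \<gamma>2 y z \<and> geodesic_path X \<gamma>3 z x \<longrightarrow>
        (\<forall>A B C :: real \<times> real.
           dist A B = dist x y \<and> dist B C = dist y z \<and> dist C A = dist z x \<longrightarrow>
           (let S = {(\<gamma>1, dist x y, A, B), (\<gamma>2, dist y z, B, C), (\<gamma>3, dist z x, C, A)} in
            \<forall>(\<gamma>, L, P, Q)\<in>S. \<forall>(\<delta>, M, R, T)\<in>S. cmp_ineq \<gamma> L P Q \<delta> M R T)))"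

text \<open>Lengths of m-strings (chains of points, consecutive ones lying in a common cell)
  from x to y, measured in the Euclidean metric of the cells.\<close>
definition string_lengths ::
  "'i set \<Rightarrow> ('i \<Rightarrow> (real \<times> real) set) \<Rightarrow> ('i \<Rightarrow> real \<times> real \<Rightarrow> 'a) \<Rightarrow> 'a \<Rightarrow> 'a \<Rightarrow> real set" where
  "string_lengths I P \<phi> x y =
     {(\<Sum>k<n. dist (u k) (w k)) | n pts c u w.
        pts 0 = x \<and> pts n = y \<and>
        (\<forall>k<n. c k \<in> I \<and> u k \<in> P (c k) \<and> w k \<in> P (c k) \<and>
               \<phi> (c k) (u k) = pts k \<and> \<phi> (c k) (w k) = pts (Suc k))}"

text \<open>X is a Euclidean polygonal complex (in the sense of Bridson--Haefliger, 2-dimensional):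
  X is obtained from a family of convex Euclidean polygons (convex polytopes in R^2),
  with characteristic maps phi i, glued by isometries of faces, and the metric of X is
  the induced (intrinsic, quotient length) metric.\<close>
definition euclidean_polygonal_complex ::
  "'a::metric_space set \<Rightarrow> 'i set \<Rightarrow> ('i \<Rightarrow> (real \<times> real) set) \<Rightarrow> ('i \<Rightarrow> real \<times> real \<Rightarrow> 'a) \<Rightarrow> bool" where
  "euclidean_polygonal_complex X I P \<phi> \<longleftrightarrow>
     (\<forall>i\<in>I. polytope (P i) \<and> P i \<noteq> {} \<and> inj_on (\<phi> i) (P i)) \<and>
     X = (\<Union>i\<in>I. \<phi> i ` P i) \<and>
     (\<forall>i\<in>I. \<forall>j\<in>I. \<forall>u\<in>P i. \<forall>v\<in>P j. \<phi> i u = \<phi> j v \<longrightarrow>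
        (\<exists>F F' h. F face_of P i \<and> F' face_of P j \<and> u \<in> F \<and>
           h ` F = F' \<and> (\<forall>a\<in>F. \<forall>b\<in>F. dist (h a) (h b) = dist a b) \<and>
           (\<forall>a\<in>F. \<phi> j (h a) = \<phi> i a))) \<and>
     (\<forall>x\<in>X. \<forall>y\<in>X. dist x y = Inf (string_lengths I P \<phi> x y))"

text \<open>Spiky triangle, realised in R^2 x R^3: the boundary of the (possibly degenerate)
  triangle a b c in the plane, with intervals of lengths la, lb, lc (possibly 0) glued at
  a, b, c, pointing in three independent extra directions.\<close>
definition spiky_triangle ::
  "real \<times> real \<Rightarrow> real \<times> real \<Rightarrow> real \<times> real \<Rightarrow> real \<Rightarrow> real \<Rightarrow> real
     \<Rightarrow> ((real \<times> real) \<times> (real \<times> real \<times> real)) set" where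
  "spiky_triangle a b c la lb lc =
     {(p, (0, 0, 0)) | p. p \<in> closed_segment a b \<union> closed_segment b c \<union> closed_segment c a} \<union>
     {(a, (s, 0, 0)) | s. 0 \<le> s \<and> s \<le> la} \<union>
     {(b, (0, s, 0)) | s. 0 \<le> s \<and> s \<le> lb} \<union>
     {(c, (0, 0, s)) | s. 0 \<le> s \<and> s \<le> lc}"

end

theory Submission
  imports Defs
begin


lemma geo_dist:
  assumes "geodesic_path X g a b" "s \<in> {0..dist a b}" "t \<in> {0..dist a b}"
  shows "dist (g s) (g t) = \<bar>s - t\<bar>"
  using assms unfolding geodesic_path_def by blast

lemma geo_basic:
  assumes "geodesic_path X g a b"
  shows "g 0 = a" "g (dist a b) = b" "g ` {0..dist a b} \<subseteq> X" "a \<in> X" "b \<in> X"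
proof -
  show "g 0 = a" "g (dist a b) = b" "g ` {0..dist a b} \<subseteq> X" using assms unfolding geodesic_path_def by auto
  then show "a \<in> X" "b \<in> X"
    by (metis atLeastAtMost_iff image_subset_iff order_refl zero_le_dist)+
qed

lemma geo_cont:
  assumes "geodesic_path X g a b"
  shows "continuous_on {0..dist a b} g"
proof -
  have "lipschitz_on 1 {0..dist a b} g"
    by (rule lipschitz_onI) (use geo_dist[OF assms] in \<open>auto simp: dist_real_def\<close>)
  then show ?thesis by (rule lipschitz_on_continuous_on)
qed

lemma geo_rev:
  assumes "geodesic_path X g a b"
  shows "geodesic_path X (\<lambda>t. g (dist a b - t)) b a"
proof -
  have d: "dist b a = dist a b" by (simp add: dist_commute)
  have im: "(\<lambda>t. g (dist a b - t)) ` {0..dist a b} \<subseteq> g ` {0..dist a b}" by auto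
  show ?thesis unfolding geodesic_path_def d
    using geo_basic[OF assms] geo_dist[OF assms] im
    by (auto simp: abs_minus_commute)
qed

lemma geo_restr:
  assumes "geodesic_path X g a b" "s \<in> {0..dist a b}"
  shows "geodesic_path X g a (g s)" "dist a (g s) = s"
proof -
  show ds: "dist a (g s) = s" using geo_dist[OF assms(1) _ assms(2), of 0] geo_basic[OF assms(1)] assms(2) by auto
  show "geodesic_path X g a (g s)" unfolding geodesic_path_def ds
    using geo_basic[OF assms(1)] geo_dist[OF assms(1)] assms(2) by auto
qed

lemma cat0_unique:
  assumes "CAT0 X" "geodesic_path X g a b" "geodesic_path X h a b" "u \<in> {0..dist a b}"
  shows "g u = h u"
proof -
  define L where "L = dist a b"
  have aX: "a \<in> X" and bX: "b \<in> X" using geo_basic[OF assms(2)] by auto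
  define h' where "h' = (\<lambda>t. h (dist a b - t))"
  have g3: "geodesic_path X h' b a" unfolding h'_def by (rule geo_rev[OF assms(3)])
  have g2: "geodesic_path X (\<lambda>t. b) b b" unfolding geodesic_path_def using bX by auto
  define A :: "real \<times> real" where "A = (0,0)"
  define B :: "real \<times> real" where "B = (L,0)"
  have dAB: "dist A B = dist a b" "dist B B = dist b b" "dist B A = dist b a"
    by (auto simp: A_def B_def L_def dist_Pair_Pair dist_commute)
  have C2: "\<forall>x\<in>X. \<forall>y\<in>X. \<forall>z\<in>X. \<forall>\<gamma>1 \<gamma>2 \<gamma>3.
        geodesic_path X \<gamma>1 x y \<and> geodesic_path X \<gamma>2 y z \<and> geodesic_path X \<gamma>3 z x \<longrightarrow>
        (\<forall>A B C :: real \<times> real.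
           dist A B = dist x y \<and> dist B C = dist y z \<and> dist C A = dist z x \<longrightarrow>
           (let S = {(\<gamma>1, dist x y, A, B), (\<gamma>2, dist y z, B, C), (\<gamma>3, dist z x, C, A)} in
            \<forall>(\<gamma>, L, P, Q)\<in>S. \<forall>(\<delta>, M, R, T)\<in>S. cmp_ineq \<gamma> L P Q \<delta> M R T))"
    using assms(1) unfolding CAT0_def by blast
  have "cmp_ineq g (dist a b) A B h' (dist b a) B A"
    using C2[rule_format, OF aX bX bX, of g "\<lambda>t. b" h' A B B] assms(2) g2 g3 dAB
    unfolding Let_def by auto
  then have cmp: "\<forall>s\<in>{0..1}. \<forall>t\<in>{0..1}. dist (g (s * L)) (h' (t * L)) \<le> dist (A + s *\<^sub>R (B - A)) (B + t *\<^sub>R (A - B))"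
    unfolding cmp_ineq_def L_def by (simp add: dist_commute)
  show ?thesis
  proof (cases "L = 0")
    case True
    then have "u = 0" using assms(4) L_def by auto
    then show ?thesis using geo_basic[OF assms(2)] geo_basic[OF assms(3)] by simp
  next
    case False
    then have Lp: "L > 0" using L_def by auto
    have u: "0 \<le> u" "u \<le> L" using assms(4) L_def by auto
    define s where "s = u / L"
    have s01: "s \<in> {0..1}" "1 - s \<in> {0..1}" using u Lp by (auto simp: s_def field_simps)
    have sL: "s * L = u" "(1 - s) * L = L - u" using Lp by (auto simp: s_def field_simps)
    have "dist (g u) (h u) \<le> dist (A + s *\<^sub>R (B - A)) (B + (1 - s) *\<^sub>R (A - B))"
      using cmp[rule_format, OF s01] unfolding sL unfolding h'_def L_def by simp
    also have "\<dots> = 0" by (simp add: A_def B_def algebra_simps)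
    finally show ?thesis by simp
  qed
qed

lemma branch:
  assumes "CAT0 X" "geodesic_path X g a b" "geodesic_path X h a c"
    "s \<in> {0..dist a b}" "t \<in> {0..dist a c}" "g s = h t"
  shows "s = t" "\<forall>u\<in>{0..s}. g u = h u"
proof -
  have gs: "geodesic_path X g a (g s)" "dist a (g s) = s" using geo_restr[OF assms(2,4)] by auto
  have ht: "geodesic_path X h a (h t)" "dist a (h t) = t" using geo_restr[OF assms(3,5)] by auto
  show "s = t" using gs ht assms(6) by simp
  show "\<forall>u\<in>{0..s}. g u = h u"
    using cat0_unique[OF assms(1) gs(1), of h] ht assms(6) gs(2) by auto
qed

definition br :: "(real \<Rightarrow> 'a) \<Rightarrow> real \<Rightarrow> (real \<Rightarrow> 'a) \<Rightarrow> real \<Rightarrow> real" where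
  "br g L h M = Sup {t \<in> {0..min L M}. g t = h t}"

definition vfacts :: "(real \<Rightarrow> 'a) \<Rightarrow> real \<Rightarrow> (real \<Rightarrow> 'a) \<Rightarrow> real \<Rightarrow> real \<Rightarrow> bool" where
  "vfacts g1 L1 g3 L3 p \<longleftrightarrow> 0 \<le> p \<and> p \<le> L1 \<and> p \<le> L3 \<and>
     (\<forall>u\<in>{0..p}. g1 u = g3 (L3 - u)) \<and>
     (\<forall>s t. s \<in> {0..L1} \<longrightarrow> t \<in> {0..L3} \<longrightarrow> g1 s = g3 t \<longrightarrow> s + t = L3 \<and> s \<le> p)"

lemma br_props:
  fixes g h :: "real \<Rightarrow> 'a::metric_space"
  assumes "CAT0 X" "geodesic_path X g a b" "geodesic_path X h a c"
  defines "\<beta> \<equiv> br g (dist a b) h (dist a c)"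
  shows "0 \<le> \<beta>" "\<beta> \<le> dist a b" "\<beta> \<le> dist a c" "\<forall>u\<in>{0..\<beta>}. g u = h u"
    "\<forall>s t. s \<in> {0..dist a b} \<longrightarrow> t \<in> {0..dist a c} \<longrightarrow> g s = h t \<longrightarrow> s = t \<and> s \<le> \<beta>"
proof -
  define S where "S = {t \<in> {0..min (dist a b) (dist a c)}. g t = h t}"
  have b: "\<beta> = Sup S" unfolding \<beta>_def br_def S_def by simp
  have cg: "continuous_on {0..min (dist a b) (dist a c)} g"
    using continuous_on_subset[OF geo_cont[OF assms(2)]] by auto
  have ch: "continuous_on {0..min (dist a b) (dist a c)} h"
    using continuous_on_subset[OF geo_cont[OF assms(3)]] by auto
  have S_eq: "S = {t \<in> {0..min (dist a b) (dist a c)}. dist (g t) (h t) = 0}"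
    unfolding S_def by auto
  have cS: "closed S" unfolding S_eq
    by (rule continuous_closed_preimage_constant) (auto intro!: continuous_intros cg ch)
  have 0: "0 \<in> S" unfolding S_def using geo_basic[OF assms(2)] geo_basic[OF assms(3)] by auto
  have bdd: "bdd_above S" unfolding S_def by (rule bdd_aboveI[of _ "dist a b"]) auto
  have bS: "\<beta> \<in> S" unfolding b using closed_contains_Sup[OF _ bdd cS] 0 by auto
  then show "0 \<le> \<beta>" "\<beta> \<le> dist a b" "\<beta> \<le> dist a c" unfolding S_def by auto
  then show "\<forall>u\<in>{0..\<beta>}. g u = h u"
    using branch(2)[OF assms(1-3), of \<beta> \<beta>] bS unfolding S_def by auto
  show "\<forall>s t. s \<in> {0..dist a b} \<longrightarrow> t \<in> {0..dist a c} \<longrightarrow> g s = h t \<longrightarrow> s = t \<and> s \<le> \<beta>"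
  proof (intro allI impI)
    fix s t assume st: "s \<in> {0..dist a b}" "t \<in> {0..dist a c}" "g s = h t"
    have "s = t" using branch(1)[OF assms(1-3) st] .
    then have "s \<in> S" using st unfolding S_def by auto
    then have "s \<le> \<beta>" unfolding b by (rule cSup_upper[OF _ bdd])
    then show "s = t \<and> s \<le> \<beta>" using \<open>s = t\<close> by simp
  qed
qed

lemma vertex:
  fixes g1 g3 :: "real \<Rightarrow> 'a::metric_space"
  assumes "CAT0 X" "geodesic_path X g1 x y" "geodesic_path X g3 z x"
  shows "vfacts g1 (dist x y) g3 (dist z x) (br g1 (dist x y) (\<lambda>t. g3 (dist z x - t)) (dist z x))"
proof -
  have h: "geodesic_path X (\<lambda>t. g3 (dist z x - t)) x z" using geo_rev[OF assms(3)] .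
  have dzx: "dist x z = dist z x" by (simp add: dist_commute)
  note P = br_props[OF assms(1,2) h, unfolded dzx]
  define p where "p = br g1 (dist x y) (\<lambda>t. g3 (dist z x - t)) (dist z x)"
  have side: "s + t = dist z x \<and> s \<le> p" if "s \<in> {0..dist x y}" "t \<in> {0..dist z x}" "g1 s = g3 t" for s t
  proof -
    have "g1 s = g3 (dist z x - (dist z x - t))" using that by simp
    moreover have "dist z x - t \<in> {0..dist z x}" using that by auto
    ultimately have "s = dist z x - t \<and> s \<le> p" using P(5)[rule_format, of s "dist z x - t"] that(1) unfolding p_def by blast
    then show ?thesis by simp
  qed
  show ?thesis unfolding vfacts_def p_def[symmetric]
    using P(1-4) side unfolding p_def by blast
qed



lemma pq_le:
  assumes "vfacts g1 L1 g3 L3 p" "vfacts g2 L2 g1 L1 q" "vfacts g3 L3 g2 L2 r"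
  shows "p + q \<le> L1"
proof (rule ccontr)
  assume H: "\<not> p + q \<le> L1"
  note P = assms(1)[unfolded vfacts_def] and Q = assms(2)[unfolded vfacts_def]
    and R = assms(3)[unfolded vfacts_def]
  have m1a: "g1 (L1 - q) = g3 (L3 - (L1 - q))" using P H Q by auto
  have m1b: "g2 q = g1 (L1 - q)" using Q by auto
  have "(L3 - (L1 - q)) + q = L2" using R m1a m1b P Q H by (smt (verit) atLeastAtMost_iff)
  moreover have m2a: "g1 p = g3 (L3 - p)" using P by auto
  moreover have m2b: "g2 (L1 - p) = g1 (L1 - (L1 - p))" using Q H P by auto
  ultimately have "(L3 - p) + (L1 - p) = L2" using R P Q H by (smt (verit) atLeastAtMost_iff)
  with \<open>(L3 - (L1 - q)) + q = L2\<close> H show False by linarith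
qed

lemma degen:
  assumes "vfacts g1 L1 g3 L3 p" "vfacts g2 L2 g1 L1 q" "vfacts g3 L3 g2 L2 r" "p + q = L1"
  shows "q + r = L2"
proof -
  note P = assms(1)[unfolded vfacts_def] and Q = assms(2)[unfolded vfacts_def]
    and R = assms(3)[unfolded vfacts_def]
  have rp: "r + p \<le> L3" using pq_le[OF assms(3,1,2)] .
  have "g2 q = g1 (L1 - q)" using Q by auto
  also have "\<dots> = g1 p" using assms(4) by (metis add_diff_cancel_right')
  also have "\<dots> = g3 (L3 - p)" using P by auto
  finally have "g3 (L3 - p) = g2 q" by simp
  then have "L3 - p + q = L2 \<and> L3 - p \<le> r" using R P Q by (smt (verit) atLeastAtMost_iff)
  then show ?thesis using rp by linarith
qed



lemma main_homeo:
  fixes g1 g2 g3 :: "real \<Rightarrow> 'a::metric_space"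
  assumes i1: "\<forall>s\<in>{0..L1}. \<forall>t\<in>{0..L1}. dist (g1 s) (g1 t) = \<bar>s - t\<bar>"
    and i2: "\<forall>s\<in>{0..L2}. \<forall>t\<in>{0..L2}. dist (g2 s) (g2 t) = \<bar>s - t\<bar>"
    and i3: "\<forall>s\<in>{0..L3}. \<forall>t\<in>{0..L3}. dist (g3 s) (g3 t) = \<bar>s - t\<bar>"
    and vp: "vfacts g1 L1 g3 L3 p" and vq: "vfacts g2 L2 g1 L1 q" and vr: "vfacts g3 L3 g2 L2 r"
  shows "\<exists>a b c. (g1 ` {0..L1} \<union> g2 ` {0..L2} \<union> g3 ` {0..L3}) homeomorphic spiky_triangle a b c p q r"
proof -
  note P = vp[unfolded vfacts_def] and Q = vq[unfolded vfacts_def] and R = vr[unfolded vfacts_def]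
  have pq: "p + q \<le> L1" using pq_le[OF vp vq vr] .
  have qr: "q + r \<le> L2" using pq_le[OF vq vr vp] .
  have rp: "r + p \<le> L3" using pq_le[OF vr vp vq] .
  have d12: "p + q = L1 \<Longrightarrow> q + r = L2" using degen[OF vp vq vr] .
  have d23: "q + r = L2 \<Longrightarrow> r + p = L3" using degen[OF vq vr vp] .
  have d31: "r + p = L3 \<Longrightarrow> p + q = L1" using degen[OF vr vp vq] .
  define c1 where "c1 = L1 - p - q"
  define c2 where "c2 = L2 - q - r"
  define c3 where "c3 = L3 - r - p"
  have c_nonneg: "0 \<le> c1" "0 \<le> c2" "0 \<le> c3" using pq qr rp by (auto simp: c1_def c2_def c3_def)
  have ceq: "c1 = 0 \<longleftrightarrow> c2 = 0" "c2 = 0 \<longleftrightarrow> c3 = 0"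
    using d12 d23 d31 by (auto simp: c1_def c2_def c3_def)
  define k :: real where "k = (if c1 = 0 then 0 else 1)"
  have e1: "g1 (L1 - q) = g2 q" using Q by auto
  have e2: "g2 (L2 - r) = g3 r" using R by auto
  have e3: "g3 (L3 - p) = g1 p" using P by auto
  have ck1: "c1 * k = c1" "c2 * k = c2" "c3 * k = c3" using ceq by (auto simp: k_def)
  define S where "S = spiky_triangle (0,0) (k,0) (0,k) p q r"
  define T where "T = g1 ` {0..L1} \<union> g2 ` {0..L2} \<union> g3 ` {0..L3}"
  define f where "f = (\<lambda>w::(real\<times>real)\<times>(real\<times>real\<times>real).
     if fst (snd w) > 0 then g1 (p - fst (snd w))
     else if fst (snd (snd w)) > 0 then g2 (q - fst (snd (snd w)))
     else if snd (snd (snd w)) > 0 then g3 (r - snd (snd (snd w)))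
     else if snd (fst w) = 0 then g1 (p + fst (fst w) * c1)
     else if fst (fst w) = 0 then g3 (r + (1 - snd (fst w)) * c3)
     else g2 (q + snd (fst w) * c2))"
  define s1 :: "real \<Rightarrow> (real\<times>real)\<times>(real\<times>real\<times>real)" where "s1 = (\<lambda>\<theta>. if \<theta> \<le> p then ((0,0),(p-\<theta>,0,0))
     else if \<theta> \<le> L1 - q then ((((\<theta>-p)/c1) * k, 0), (0,0,0))
     else ((k,0),(0,\<theta>-(L1-q),0)))"
  define s2 :: "real \<Rightarrow> (real\<times>real)\<times>(real\<times>real\<times>real)" where "s2 = (\<lambda>\<theta>. if \<theta> \<le> q then ((k,0),(0,q-\<theta>,0))
     else if \<theta> \<le> L2 - r then (((1 - (\<theta>-q)/c2) * k, ((\<theta>-q)/c2) * k), (0,0,0))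
     else ((0,k),(0,0,\<theta>-(L2-r))))"
  define s3 :: "real \<Rightarrow> (real\<times>real)\<times>(real\<times>real\<times>real)" where "s3 = (\<lambda>\<theta>. if \<theta> \<le> r then ((0,k),(0,0,r-\<theta>))
     else if \<theta> \<le> L3 - p then ((0, (1 - (\<theta>-r)/c3) * k), (0,0,0))
     else ((0,0),(\<theta>-(L3-p),0,0)))"
  have segab: "closed_segment (0,0) (k,0) = (\<lambda>t. (t*k, 0::real)) ` {0..1}"
    unfolding closed_segment_image_interval by (auto simp: image_iff)
  have segbc: "closed_segment (k,0) (0,k) = (\<lambda>t. ((1-t)*k, t*k)) ` {0..1}"
    unfolding closed_segment_image_interval by (auto simp: image_iff)
  have segca: "closed_segment (0,k) (0,0) = (\<lambda>t. (0::real, (1-t)*k)) ` {0..1}"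
    unfolding closed_segment_image_interval by (auto simp: image_iff)
  have Sdef: "S = (\<lambda>t. ((t*k, 0), (0,0,0))) ` {0..1} \<union> (\<lambda>t. (((1-t)*k, t*k), (0,0,0))) ` {0..1}
      \<union> (\<lambda>t. ((0, (1-t)*k), (0,0,0))) ` {0..1}
      \<union> (\<lambda>s. ((0,0),(s,0,0))) ` {0..p} \<union> (\<lambda>s. ((k,0),(0,s,0))) ` {0..q} \<union> (\<lambda>s. ((0,k),(0,0,s))) ` {0..r}"
  proof -
    have h1: "{(pt, (0::real,0::real,0::real)) | pt. pt \<in> U} = (\<lambda>pt. (pt,(0,0,0))) ` U" for U :: "(real\<times>real) set" by auto
    have h2: "{(a, (s,0::real,0::real)) | s. 0 \<le> s \<and> s \<le> l} = (\<lambda>s. (a,(s,0,0))) ` {0..l}" for a :: "real\<times>real" and l by auto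
    have h3: "{(a, (0::real,s,0::real)) | s. 0 \<le> s \<and> s \<le> l} = (\<lambda>s. (a,(0,s,0))) ` {0..l}" for a :: "real\<times>real" and l by auto
    have h4: "{(a, (0::real,0::real,s)) | s. 0 \<le> s \<and> s \<le> l} = (\<lambda>s. (a,(0,0,s))) ` {0..l}" for a :: "real\<times>real" and l by auto
    show ?thesis unfolding S_def spiky_triangle_def h1 h2 h3 h4 segab segbc segca image_Un image_image
      by simp
  qed
  have F1a: "s1 \<theta> \<in> S \<and> f (s1 \<theta>) = g1 \<theta>" if th: "\<theta> \<in> {0..L1}" for \<theta>
  proof (cases "\<theta> \<le> p")
    case True
    then have "s1 \<theta> = ((0,0),(p-\<theta>,0,0))" by (simp add: s1_def)
    moreover have "((0,0),(p-\<theta>,0,0)) \<in> S" unfolding Sdef using True th by auto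
    moreover have "f ((0,0),(p-\<theta>,0,0)) = g1 \<theta>" using True by (auto simp: f_def)
    ultimately show ?thesis by simp
  next
    case False
    note F = False
    show ?thesis
    proof (cases "\<theta> \<le> L1 - q")
      case True
      then have c1p: "c1 > 0" "k = 1" using F c_nonneg by (auto simp: c1_def k_def)
      have "s1 \<theta> = (((\<theta>-p)/c1, 0),(0,0,0))" using True F c1p by (simp add: s1_def)
      moreover have "(((\<theta>-p)/c1, 0),(0,0,0)) \<in> S"
      proof -
        have "(\<theta>-p)/c1 \<in> {0..1}" using True F c1p by (auto simp: c1_def field_simps)
        then have "(((\<theta>-p)/c1, 0),(0::real,0::real,0::real)) \<in> (\<lambda>t. ((t*k, 0), (0,0,0))) ` {0..1}"
          using c1p by (auto simp: image_iff)
        then show ?thesis unfolding Sdef by blast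
      qed
      moreover have "f (((\<theta>-p)/c1, 0),(0,0,0)) = g1 \<theta>" using c1p by (auto simp: f_def)
      ultimately show ?thesis by simp
    next
      case False
      then have "s1 \<theta> = ((k,0),(0,\<theta>-(L1-q),0))" using F by (simp add: s1_def)
      moreover have "((k,0),(0,\<theta>-(L1-q),0)) \<in> S" unfolding Sdef using False th by auto
      moreover have "f ((k,0),(0,\<theta>-(L1-q),0)) = g1 \<theta>"
      proof -
        have "f ((k,0),(0,\<theta>-(L1-q),0)) = g2 (L1 - \<theta>)" using False by (auto simp: f_def)
        also have "\<dots> = g1 (L1 - (L1 - \<theta>))" using Q False th by auto
        finally show ?thesis by simp
      qed
      ultimately show ?thesis by simp
    qed
  qed
  have F1b: "s2 \<theta> \<in> S \<and> f (s2 \<theta>) = g2 \<theta>" if th: "\<theta> \<in> {0..L2}" for \<theta>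
  proof (cases "\<theta> \<le> q")
    case True
    then have "s2 \<theta> = ((k,0),(0,q-\<theta>,0))" by (simp add: s2_def)
    moreover have "((k,0),(0,q-\<theta>,0)) \<in> S" unfolding Sdef using True th by auto
    moreover have "f ((k,0),(0,q-\<theta>,0)) = g2 \<theta>"
    proof (cases "\<theta> = q")
      case True
      have "f ((k,0),(0,q-\<theta>,0)) = g1 (p + c1)" using True by (simp add: f_def) (metis ck1(1) mult.commute)
      also have "\<dots> = g2 q" using e1 by (simp add: c1_def)
      finally show ?thesis using True by simp
    qed (use True in \<open>auto simp: f_def\<close>)
    ultimately show ?thesis by simp
  next
    case False
    note F = False
    show ?thesis
    proof (cases "\<theta> \<le> L2 - r")
      case True
      then have c2p: "c2 > 0" "k = 1" using F c_nonneg ceq by (auto simp: c2_def k_def)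
      define t where "t = (\<theta>-q)/c2"
      have t01: "0 < t" "t \<le> 1" using True F c2p by (auto simp: t_def c2_def field_simps)
      have "s2 \<theta> = ((1 - t, t),(0,0,0))" using True F c2p by (simp add: s2_def t_def)
      moreover have "((1 - t, t),(0::real,0::real,0::real)) \<in> S"
      proof -
        have "((1 - t, t),(0::real,0::real,0::real)) \<in> (\<lambda>t. (((1-t)*k, t*k), (0,0,0))) ` {0..1}"
          using c2p t01 by (auto simp: image_iff)
        then show ?thesis unfolding Sdef by blast
      qed
      moreover have "f ((1 - t, t),(0,0,0)) = g2 \<theta>"
      proof (cases "t = 1")
        case True
        then have "\<theta> = L2 - r" unfolding t_def using c2p by (auto simp: c2_def field_simps)
        then show ?thesis using True e2 by (simp add: f_def)
      next
        case False
        have "q + t * c2 = \<theta>" using c2p by (simp add: t_def)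
        then show ?thesis using False t01 by (simp add: f_def)
      qed
      ultimately show ?thesis by simp
    next
      case False
      then have "s2 \<theta> = ((0,k),(0,0,\<theta>-(L2-r)))" using F by (simp add: s2_def)
      moreover have "((0,k),(0,0,\<theta>-(L2-r))) \<in> S" unfolding Sdef using False th by auto
      moreover have "f ((0,k),(0,0,\<theta>-(L2-r))) = g2 \<theta>"
      proof -
        have "f ((0,k),(0,0,\<theta>-(L2-r))) = g3 (L2 - \<theta>)" using False by (auto simp: f_def)
        also have "\<dots> = g2 (L2 - (L2 - \<theta>))" using R False th by auto
        finally show ?thesis by simp
      qed
      ultimately show ?thesis by simp
    qed
  qed
  have F1c: "s3 \<theta> \<in> S \<and> f (s3 \<theta>) = g3 \<theta>" if th: "\<theta> \<in> {0..L3}" for \<theta>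
  proof (cases "\<theta> \<le> r")
    case True
    then have "s3 \<theta> = ((0,k),(0,0,r-\<theta>))" by (simp add: s3_def)
    moreover have "((0,k),(0,0,r-\<theta>)) \<in> S" unfolding Sdef using True th by auto
    moreover have "f ((0,k),(0,0,r-\<theta>)) = g3 \<theta>"
    proof (cases "\<theta> = r")
      case True
      show ?thesis
      proof (cases "k = 0")
        case True
        then have "c3 = 0" using ceq by (auto simp: k_def split: if_splits)
        then have "r = L3 - p" by (simp add: c3_def)
        then show ?thesis using True \<open>\<theta> = r\<close> e3 by (simp add: f_def)
      next
        case False
        then have "k = 1" by (simp add: k_def split: if_splits)
        then show ?thesis using \<open>\<theta> = r\<close> by (simp add: f_def)
      qed
    qed (use True in \<open>auto simp: f_def\<close>)
    ultimately show ?thesis by simp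
  next
    case False
    note F = False
    show ?thesis
    proof (cases "\<theta> \<le> L3 - p")
      case True
      then have c3p: "c3 > 0" "k = 1" using F c_nonneg ceq by (auto simp: c3_def k_def)
      define t where "t = (\<theta>-r)/c3"
      have t01: "0 < t" "t \<le> 1" using True F c3p by (auto simp: t_def c3_def field_simps)
      have "s3 \<theta> = ((0, 1 - t),(0,0,0))" using True F c3p by (simp add: s3_def t_def)
      moreover have "((0, 1 - t),(0::real,0::real,0::real)) \<in> S"
      proof -
        have "((0, 1 - t),(0::real,0::real,0::real)) \<in> (\<lambda>t. ((0, (1-t)*k), (0,0,0))) ` {0..1}"
          using c3p t01 by (auto simp: image_iff)
        then show ?thesis unfolding Sdef by blast
      qed
      moreover have "f ((0, 1 - t),(0,0,0)) = g3 \<theta>"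
      proof (cases "t = 1")
        case True
        then have "\<theta> = L3 - p" unfolding t_def using c3p by (auto simp: c3_def field_simps)
        then show ?thesis using True e3 by (simp add: f_def)
      next
        case False
        have "r + t * c3 = \<theta>" using c3p by (simp add: t_def)
        then show ?thesis using False t01 by (simp add: f_def)
      qed
      ultimately show ?thesis by simp
    next
      case False
      then have "s3 \<theta> = ((0,0),(\<theta>-(L3-p),0,0))" using F by (simp add: s3_def)
      moreover have "((0,0),(\<theta>-(L3-p),0,0)) \<in> S" unfolding Sdef using False th by auto
      moreover have "f ((0,0),(\<theta>-(L3-p),0,0)) = g3 \<theta>"
      proof -
        have "f ((0,0),(\<theta>-(L3-p),0,0)) = g1 (L3 - \<theta>)" using False by (auto simp: f_def)
        also have "\<dots> = g3 (L3 - (L3 - \<theta>))" using P False th by auto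
        finally show ?thesis by simp
      qed
      ultimately show ?thesis by simp
    qed
  qed
  have kc: "k = 0 \<Longrightarrow> c1 = 0 \<and> c2 = 0 \<and> c3 = 0" "k \<noteq> 0 \<Longrightarrow> k = 1 \<and> c1 > 0 \<and> c2 > 0 \<and> c3 > 0"
    using ceq c_nonneg by (auto simp: k_def split: if_splits)
  have s1p: "s1 p = ((0,0),(0,0,0))" by (simp add: s1_def)
  have pL: "p \<in> {0..L1}" using P by auto
  have s1_mid: "\<not> \<theta> \<le> p \<Longrightarrow> \<theta> \<le> L1 - q \<Longrightarrow> s1 \<theta> = ((((\<theta>-p)/c1)*k,0),(0,0,0))" for \<theta>
    by (simp add: s1_def)
  have s2_mid: "\<not> \<theta> \<le> q \<Longrightarrow> \<theta> \<le> L2 - r \<Longrightarrow> s2 \<theta> = (((1 - (\<theta>-q)/c2) * k, ((\<theta>-q)/c2) * k), (0,0,0))" for \<theta>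
    by (simp add: s2_def)
  have s3_mid: "\<not> \<theta> \<le> r \<Longrightarrow> \<theta> \<le> L3 - p \<Longrightarrow> s3 \<theta> = ((0, (1 - (\<theta>-r)/c3) * k), (0,0,0))" for \<theta>
    by (simp add: s3_def)
  have F2: "(\<exists>\<theta>\<in>{0..L1}. w = s1 \<theta>) \<or> (\<exists>\<theta>\<in>{0..L2}. w = s2 \<theta>) \<or> (\<exists>\<theta>\<in>{0..L3}. w = s3 \<theta>)"
    if w: "w \<in> S" for w
  proof -
    consider (E1) t where "t \<in> {0..1}" "w = ((t*k, 0), (0,0,0))"
      | (E2) t where "t \<in> {0..1}" "w = (((1-t)*k, t*k), (0,0,0))"
      | (E3) t where "t \<in> {0..1}" "w = ((0, (1-t)*k), (0,0,0))"
      | (K1) s where "s \<in> {0..p}" "w = ((0,0),(s,0,0))"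
      | (K2) s where "s \<in> {0..q}" "w = ((k,0),(0,s,0))"
      | (K3) s where "s \<in> {0..r}" "w = ((0,k),(0,0,s))"
      using w unfolding Sdef by blast
    then show ?thesis
    proof cases
      case (E1 t)
      show ?thesis
      proof (cases "k = 0 \<or> t = 0")
        case True
        then have "w = s1 p" using E1 s1p by auto
        then show ?thesis using pL by blast
      next
        case False
        then have kk: "k = 1" "c1 > 0" "t > 0" using kc E1 by auto
        have h: "0 < t*c1" "t*c1 \<le> c1" using kk E1 by (auto intro!: mult_pos_pos mult_left_le_one_le)
        have A: "\<not> p + t*c1 \<le> p" using h by simp
        have B: "p + t*c1 \<le> L1 - q" using h(2) unfolding c1_def by simp
        have C: "(p + t*c1 - p)/c1 = t" using kk by simp
        have "w = s1 (p + t * c1)" using kk E1 A B C s1_mid[of "p + t*c1"] by simp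
        moreover have "p + t * c1 \<in> {0..L1}" using P Q h B by simp
        ultimately show ?thesis by blast
      qed
    next
      case (E2 t)
      show ?thesis
      proof (cases "k = 0")
        case True
        then have "w = s1 p" using E2 s1p by auto
        then show ?thesis using pL by blast
      next
        case False
        then have kk: "k = 1" "c2 > 0" using kc by auto
        have "w = s2 (q + t * c2)"
        proof (cases "t = 0")
          case True then show ?thesis using kk E2 by (auto simp: s2_def)
        next
          case False
          have h: "0 < t*c2" "t*c2 \<le> c2" using kk E2 False by (auto intro!: mult_pos_pos mult_left_le_one_le)
          have A: "\<not> q + t*c2 \<le> q" using h by simp
          have B: "q + t*c2 \<le> L2 - r" using h(2) unfolding c2_def by simp
          have C: "(q + t*c2 - q)/c2 = t" using kk by simp
          show ?thesis using kk E2 A B C s2_mid[of "q + t*c2"] by simp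
        qed
        moreover have "q + t * c2 \<in> {0..L2}"
        proof -
          have "0 \<le> t*c2" "t*c2 \<le> c2" using kk E2 by (auto intro!: mult_nonneg_nonneg mult_left_le_one_le)
          then show ?thesis using Q R c2_def by auto
        qed
        ultimately show ?thesis by blast
      qed
    next
      case (E3 t)
      show ?thesis
      proof (cases "k = 0")
        case True
        then have "w = s1 p" using E3 s1p by auto
        then show ?thesis using pL by blast
      next
        case False
        then have kk: "k = 1" "c3 > 0" using kc by auto
        have "w = s3 (r + t * c3)"
        proof (cases "t = 0")
          case True then show ?thesis using kk E3 by (auto simp: s3_def)
        next
          case False
          have h: "0 < t*c3" "t*c3 \<le> c3" using kk E3 False by (auto intro!: mult_pos_pos mult_left_le_one_le)
          have A: "\<not> r + t*c3 \<le> r" using h by simp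
          have B: "r + t*c3 \<le> L3 - p" using h(2) unfolding c3_def by simp
          have C: "(r + t*c3 - r)/c3 = t" using kk by simp
          show ?thesis using kk E3 A B C s3_mid[of "r + t*c3"] by simp
        qed
        moreover have "r + t * c3 \<in> {0..L3}"
        proof -
          have "0 \<le> t*c3" "t*c3 \<le> c3" using kk E3 by (auto intro!: mult_nonneg_nonneg mult_left_le_one_le)
          then show ?thesis using R P c3_def by auto
        qed
        ultimately show ?thesis by blast
      qed
    next
      case (K1 s)
      then have "w = s1 (p - s)" "p - s \<in> {0..L1}" using P by (auto simp: s1_def)
      then show ?thesis by blast
    next
      case (K2 s)
      then have "w = s2 (q - s)" "q - s \<in> {0..L2}" using Q by (auto simp: s2_def)
      then show ?thesis by blast
    next
      case (K3 s)
      then have "w = s3 (r - s)" "r - s \<in> {0..L3}" using R by (auto simp: s3_def)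
      then show ?thesis by blast
    qed
  qed
  have F12: "s1 \<theta> = s2 \<theta>'" if th: "\<theta> \<in> {0..L1}" "\<theta>' \<in> {0..L2}" "g1 \<theta> = g2 \<theta>'" for \<theta> \<theta>'
  proof -
    have h: "\<theta>' + \<theta> = L1" "\<theta>' \<le> q" using Q th by metis+
    have e: "s2 \<theta>' = ((k,0),(0,q-\<theta>',0))" using h by (simp add: s2_def)
    show ?thesis
    proof (cases "\<theta> \<le> p")
      case True
      then have "\<theta> = p" "\<theta>' = q" "c1 = 0" using h pq by (auto simp: c1_def)
      then have "k = 0" by (simp add: k_def)
      then show ?thesis using e \<open>\<theta> = p\<close> \<open>\<theta>' = q\<close> by (simp add: s1_def)
    next
      case False
      show ?thesis
      proof (cases "\<theta> \<le> L1 - q")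
        case True
        then have "\<theta> = L1 - q" "\<theta>' = q" "c1 > 0" using h False by (auto simp: c1_def)
        then have "k = 1" "(\<theta> - p)/c1 = 1" by (auto simp: k_def c1_def)
        then show ?thesis using e s1_mid[OF False True] \<open>\<theta>' = q\<close> by simp
      next
        case False
        then show ?thesis using e h \<open>\<not> \<theta> \<le> p\<close> by (simp add: s1_def)
      qed
    qed
  qed
  have F23: "s2 \<theta> = s3 \<theta>'" if th: "\<theta> \<in> {0..L2}" "\<theta>' \<in> {0..L3}" "g2 \<theta> = g3 \<theta>'" for \<theta> \<theta>'
  proof -
    have h: "\<theta>' + \<theta> = L2" "\<theta>' \<le> r" using R th by metis+
    have e: "s3 \<theta>' = ((0,k),(0,0,r-\<theta>'))" using h by (simp add: s3_def)
    show ?thesis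
    proof (cases "\<theta> \<le> q")
      case True
      then have "\<theta> = q" "\<theta>' = r" "c2 = 0" using h qr by (auto simp: c2_def)
      then have "k = 0" using ceq by (simp add: k_def)
      then show ?thesis using e \<open>\<theta> = q\<close> \<open>\<theta>' = r\<close> by (simp add: s2_def)
    next
      case False
      show ?thesis
      proof (cases "\<theta> \<le> L2 - r")
        case True
        then have "\<theta> = L2 - r" "\<theta>' = r" "c2 > 0" using h False by (auto simp: c2_def)
        then have "k = 1" "(\<theta> - q)/c2 = 1" using ceq by (auto simp: k_def c2_def)
        then show ?thesis using e s2_mid[OF False True] \<open>\<theta>' = r\<close> by simp
      next
        case False
        then show ?thesis using e h \<open>\<not> \<theta> \<le> q\<close> by (simp add: s2_def)
      qed
    qed
  qed
  have F31: "s3 \<theta> = s1 \<theta>'" if th: "\<theta> \<in> {0..L3}" "\<theta>' \<in> {0..L1}" "g3 \<theta> = g1 \<theta>'" for \<theta> \<theta>'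
  proof -
    have h: "\<theta>' + \<theta> = L3" "\<theta>' \<le> p" using P th by metis+
    have e: "s1 \<theta>' = ((0,0),(p-\<theta>',0,0))" using h by (simp add: s1_def)
    show ?thesis
    proof (cases "\<theta> \<le> r")
      case True
      then have "\<theta> = r" "\<theta>' = p" "c3 = 0" using h rp by (auto simp: c3_def)
      then have "k = 0" using ceq by (simp add: k_def)
      then show ?thesis using e \<open>\<theta> = r\<close> \<open>\<theta>' = p\<close> by (simp add: s3_def)
    next
      case False
      show ?thesis
      proof (cases "\<theta> \<le> L3 - p")
        case True
        then have "\<theta> = L3 - p" "\<theta>' = p" "c3 > 0" using h False by (auto simp: c3_def)
        then have "k = 1" "(\<theta> - r)/c3 = 1" using ceq by (auto simp: k_def c3_def)
        then show ?thesis using e s3_mid[OF False True] \<open>\<theta>' = p\<close> by simp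
      next
        case False
        then show ?thesis using e h \<open>\<not> \<theta> \<le> r\<close> by (simp add: s3_def)
      qed
    qed
  qed
  have S1: "\<theta> = \<theta>'" if "\<theta> \<in> {0..L1}" "\<theta>' \<in> {0..L1}" "g1 \<theta> = g1 \<theta>'" for \<theta> \<theta>'
    using i1 that by (metis abs_eq_0 dist_self eq_iff_diff_eq_0)
  have S2: "\<theta> = \<theta>'" if "\<theta> \<in> {0..L2}" "\<theta>' \<in> {0..L2}" "g2 \<theta> = g2 \<theta>'" for \<theta> \<theta>'
    using i2 that by (metis abs_eq_0 dist_self eq_iff_diff_eq_0)
  have S3: "\<theta> = \<theta>'" if "\<theta> \<in> {0..L3}" "\<theta>' \<in> {0..L3}" "g3 \<theta> = g3 \<theta>'" for \<theta> \<theta>'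
    using i3 that by (metis abs_eq_0 dist_self eq_iff_diff_eq_0)
  define Rep where "Rep = (\<lambda>w m. (\<exists>\<theta>\<in>{0..L1}. w = s1 \<theta> \<and> m = g1 \<theta>) \<or> (\<exists>\<theta>\<in>{0..L2}. w = s2 \<theta> \<and> m = g2 \<theta>)
      \<or> (\<exists>\<theta>\<in>{0..L3}. w = s3 \<theta> \<and> m = g3 \<theta>))"
  have Rep_uniq: "w1 = w2" if "Rep w1 m" "Rep w2 m" for w1 w2 m
    using that unfolding Rep_def
    apply (elim disjE bexE conjE)
    using S1 S2 S3 F12 F23 F31 by metis+
  have Rep_f: "Rep w (f w)" if "w \<in> S" for w
    using F2[OF that] F1a F1b F1c unfolding Rep_def by metis
  have inj: "inj_on f S"
    by (rule inj_onI) (metis Rep_f Rep_uniq)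
  have img: "f ` S = T"
  proof
    show "f ` S \<subseteq> T" unfolding T_def using Rep_f unfolding Rep_def by blast
    show "T \<subseteq> f ` S" unfolding T_def using F1a F1b F1c by (force simp: image_iff)
  qed
  have "lipschitz_on 1 {0..L1} g1"
    by (rule lipschitz_onI) (use i1 in \<open>auto simp: dist_real_def\<close>)
  then have cg1: "continuous_on {0..L1} g1" by (rule lipschitz_on_continuous_on)
  have "lipschitz_on 1 {0..L2} g2"
    by (rule lipschitz_onI) (use i2 in \<open>auto simp: dist_real_def\<close>)
  then have cg2: "continuous_on {0..L2} g2" by (rule lipschitz_on_continuous_on)
  have "lipschitz_on 1 {0..L3} g3"
    by (rule lipschitz_onI) (use i3 in \<open>auto simp: dist_real_def\<close>)
  then have cg3: "continuous_on {0..L3} g3" by (rule lipschitz_on_continuous_on)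
  have piece: "continuous_on A f \<and> compact A"
    if "A = h ` {u..v}" "continuous_on {u..v} h" "continuous_on A f'" "\<And>w. w \<in> A \<Longrightarrow> f w = f' w"
    for A :: "((real\<times>real)\<times>(real\<times>real\<times>real)) set" and h :: "real \<Rightarrow> _" and u v f'
  proof
    show "continuous_on A f" using continuous_on_eq[OF that(3)] that(4) by metis
    show "compact A" unfolding that(1) by (rule compact_continuous_image[OF that(2) compact_Icc])
  qed
  define E1 where "E1 = (\<lambda>t. ((t*k, 0::real), (0::real,0::real,0::real))) ` {0..1}"
  define E2 where "E2 = (\<lambda>t. (((1-t)*k, t*k), (0::real,0::real,0::real))) ` {0..1}"
  define E3 where "E3 = (\<lambda>t. ((0::real, (1-t)*k), (0::real,0::real,0::real))) ` {0..1}"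
  define K1 where "K1 = (\<lambda>s. ((0::real,0::real),(s,0::real,0::real))) ` {0..p}"
  define K2 where "K2 = (\<lambda>s. ((k,0::real),(0::real,s,0::real))) ` {0..q}"
  define K3 where "K3 = (\<lambda>s. ((0::real,k),(0::real,0::real,s))) ` {0..r}"
  have SU: "S = E1 \<union> E2 \<union> E3 \<union> K1 \<union> K2 \<union> K3"
    unfolding Sdef E1_def E2_def E3_def K1_def K2_def K3_def by (rule refl)
  have pE1: "continuous_on E1 f \<and> compact E1"
  proof (rule piece[OF E1_def])
    show "continuous_on {0..1} (\<lambda>t. ((t*k, 0::real), (0::real,0::real,0::real)))" by (intro continuous_intros)
    show "continuous_on E1 (\<lambda>w. g1 (p + fst (fst w) * c1))"
    proof (rule continuous_on_compose2[OF cg1])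
      show "continuous_on E1 (\<lambda>w. p + fst (fst w) * c1)" by (intro continuous_intros)
      show "(\<lambda>w. p + fst (fst w) * c1) ` E1 \<subseteq> {0..L1}"
      proof (rule image_subsetI)
        fix w assume "w \<in> E1"
        then obtain t where t: "t \<in> {0..1}" "w = ((t*k, 0::real), (0::real,0::real,0::real))" unfolding E1_def by blast
        have eq: "fst (fst w) * c1 = t * c1" using t(2) ck1(1) by (simp add: mult.commute mult.left_commute) blast
        have "0 \<le> t*c1" "t*c1 \<le> c1" using t(1) c_nonneg by (simp_all add: mult_left_le_one_le)
        moreover have "0 \<le> p" "0 \<le> q" "L1 = p + q + c1" using P Q by (auto simp: c1_def)
        ultimately show "p + fst (fst w) * c1 \<in> {0..L1}" unfolding eq by simp
      qed
    qed
    show "f w = g1 (p + fst (fst w) * c1)" if wP: "w \<in> E1" for w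
    proof -
      obtain t where t: "w = ((t*k, 0::real), (0::real,0::real,0::real))" using wP unfolding E1_def by blast
      show ?thesis unfolding t f_def by simp
    qed
  qed
  have bas: "0 \<le> p" "p \<le> L1" "p \<le> L3" "0 \<le> q" "q \<le> L2" "q \<le> L1" "0 \<le> r" "r \<le> L3" "r \<le> L2"
    using P Q R by auto
  have L1e: "L1 = p + q + c1" and L2e: "L2 = q + r + c2" and L3e: "L3 = r + p + c3"
    by (auto simp: c1_def c2_def c3_def)
  have pE2: "continuous_on E2 f \<and> compact E2"
  proof (rule piece[OF E2_def])
    show "continuous_on {0..1} (\<lambda>t. (((1-t)*k, t*k), (0::real,0::real,0::real)))" by (intro continuous_intros)
    show "continuous_on E2 (\<lambda>w. g2 (q + snd (fst w) * c2))"
    proof (rule continuous_on_compose2[OF cg2])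
      show "continuous_on E2 (\<lambda>w. q + snd (fst w) * c2)" by (intro continuous_intros)
      show "(\<lambda>w. q + snd (fst w) * c2) ` E2 \<subseteq> {0..L2}"
      proof (rule image_subsetI)
        fix w assume "w \<in> E2"
        then obtain t where t: "t \<in> {0..1}" "w = (((1-t)*k, t*k), (0::real,0::real,0::real))" unfolding E2_def by blast
        have eq: "snd (fst w) * c2 = t * c2" using t(2) ck1(2) by (simp add: mult.commute mult.left_commute) blast
        have "0 \<le> t*c2" "t*c2 \<le> c2" using t(1) c_nonneg by (simp_all add: mult_left_le_one_le)
        then show "q + snd (fst w) * c2 \<in> {0..L2}" unfolding eq using bas L2e by simp
      qed
    qed
    show "f w = g2 (q + snd (fst w) * c2)" if wP: "w \<in> E2" for w
    proof -
      obtain t where t: "t \<in> {0..1}" "w = (((1-t)*k, t*k), (0::real,0::real,0::real))" using wP unfolding E2_def by blast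
      show ?thesis
      proof (cases "k = 0")
        case True
        then have "c1 = 0" "c2 = 0" using kc by auto
        then have "L1 - q = p" using L1e by simp
        then show ?thesis using t True e1 \<open>c2 = 0\<close> by (simp add: f_def)
      next
        case False
        then have k1: "k = 1" using kc by auto
        consider "t = 0" | "t = 1" | "t \<noteq> 0" "t \<noteq> 1" by blast
        then show ?thesis
        proof cases
          case 1
          then show ?thesis using t k1 e1 L1e by (simp add: f_def)
        next
          case 2
          then show ?thesis using t k1 e2 L2e by (simp add: f_def)
        next
          case 3
          then show ?thesis using t k1 by (simp add: f_def)
        qed
      qed
    qed
  qed
  have pE3: "continuous_on E3 f \<and> compact E3"
  proof (rule piece[OF E3_def])
    show "continuous_on {0..1} (\<lambda>t. ((0::real, (1-t)*k), (0::real,0::real,0::real)))" by (intro continuous_intros)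
    show "continuous_on E3 (\<lambda>w. g3 (r + (1 - snd (fst w)) * c3))"
    proof (rule continuous_on_compose2[OF cg3])
      show "continuous_on E3 (\<lambda>w. r + (1 - snd (fst w)) * c3)" by (intro continuous_intros)
      show "(\<lambda>w. r + (1 - snd (fst w)) * c3) ` E3 \<subseteq> {0..L3}"
      proof (rule image_subsetI)
        fix w assume "w \<in> E3"
        then obtain t where t: "t \<in> {0..1}" "w = ((0::real, (1-t)*k), (0::real,0::real,0::real))" unfolding E3_def by blast
        have eq: "(1 - snd (fst w)) * c3 = t * c3"
        proof (cases "k = 0")
          case True then show ?thesis using kc t by simp
        next
          case False then show ?thesis using kc t by (simp add: algebra_simps)
        qed
        have "0 \<le> t*c3" "t*c3 \<le> c3" using t(1) c_nonneg by (simp_all add: mult_left_le_one_le)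
        then show "r + (1 - snd (fst w)) * c3 \<in> {0..L3}" unfolding eq using bas L3e by simp
      qed
    qed
    show "f w = g3 (r + (1 - snd (fst w)) * c3)" if wP: "w \<in> E3" for w
    proof -
      obtain t where t: "t \<in> {0..1}" "w = ((0::real, (1-t)*k), (0::real,0::real,0::real))" using wP unfolding E3_def by blast
      show ?thesis
      proof (cases "k = 0")
        case True
        then have "c3 = 0" using kc by auto
        then have "r + c3 = L3 - p" using L3e by simp
        then show ?thesis using t True e3 by (simp add: f_def)
      next
        case False
        then have k1: "k = 1" using kc by auto
        show ?thesis
        proof (cases "t = 1")
          case True
          have "r + c3 = L3 - p" using L3e by simp
          then show ?thesis using t k1 True e3 by (simp add: f_def)
        next
          case False
          then show ?thesis using t k1 by (simp add: f_def)
        qed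
      qed
    qed
  qed
  have pK1: "continuous_on K1 f \<and> compact K1"
  proof (rule piece[OF K1_def])
    show "continuous_on {0..p} (\<lambda>s. ((0::real,0::real),(s,0::real,0::real)))" by (intro continuous_intros)
    show "continuous_on K1 (\<lambda>w. g1 (p - fst (snd w)))"
    proof (rule continuous_on_compose2[OF cg1])
      show "continuous_on K1 (\<lambda>w. p - fst (snd w))" by (intro continuous_intros)
      show "(\<lambda>w. p - fst (snd w)) ` K1 \<subseteq> {0..L1}" unfolding K1_def using bas by auto
    qed
    show "f w = g1 (p - fst (snd w))" if wP: "w \<in> K1" for w
    proof -
      obtain s where t: "s \<in> {0..p}" "w = ((0::real,0::real),(s,0::real,0::real))" using wP unfolding K1_def by blast
      show ?thesis using t by (cases "s = 0") (auto simp: f_def)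
    qed
  qed
  have pK2: "continuous_on K2 f \<and> compact K2"
  proof (rule piece[OF K2_def])
    show "continuous_on {0..q} (\<lambda>s. ((k,0::real),(0::real,s,0::real)))" by (intro continuous_intros)
    show "continuous_on K2 (\<lambda>w. g2 (q - fst (snd (snd w))))"
    proof (rule continuous_on_compose2[OF cg2])
      show "continuous_on K2 (\<lambda>w. q - fst (snd (snd w)))" by (intro continuous_intros)
      show "(\<lambda>w. q - fst (snd (snd w))) ` K2 \<subseteq> {0..L2}" unfolding K2_def using bas by auto
    qed
    show "f w = g2 (q - fst (snd (snd w)))" if wP: "w \<in> K2" for w
    proof -
      obtain s where t: "s \<in> {0..q}" "w = ((k,0::real),(0::real,s,0::real))" using wP unfolding K2_def by blast
      show ?thesis
      proof (cases "s = 0")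
        case True
        have kc1: "k * c1 = c1" by (metis ck1(1) mult.commute)
        have eq: "p + k * c1 = L1 - q" using kc1 L1e by linarith
        have "f w = g1 (p + k * c1)" using t True by (simp add: f_def)
        also have "\<dots> = g2 q" unfolding eq by (rule e1)
        finally show ?thesis using True t by simp
      qed (use t in \<open>auto simp: f_def\<close>)
    qed
  qed
  have pK3: "continuous_on K3 f \<and> compact K3"
  proof (rule piece[OF K3_def])
    show "continuous_on {0..r} (\<lambda>s. ((0::real,k),(0::real,0::real,s)))" by (intro continuous_intros)
    show "continuous_on K3 (\<lambda>w. g3 (r - snd (snd (snd w))))"
    proof (rule continuous_on_compose2[OF cg3])
      show "continuous_on K3 (\<lambda>w. r - snd (snd (snd w)))" by (intro continuous_intros)
      show "(\<lambda>w. r - snd (snd (snd w))) ` K3 \<subseteq> {0..L3}" unfolding K3_def using bas by auto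
    qed
    show "f w = g3 (r - snd (snd (snd w)))" if wP: "w \<in> K3" for w
    proof -
      obtain s where t: "s \<in> {0..r}" "w = ((0::real,k),(0::real,0::real,s))" using wP unfolding K3_def by blast
      show ?thesis
      proof (cases "s = 0")
        case True
        show ?thesis
        proof (cases "k = 0")
          case True
          then have "c3 = 0" using kc by auto
          then have "r = L3 - p" using L3e by simp
          then show ?thesis using t True \<open>s = 0\<close> e3 by (simp add: f_def)
        next
          case False
          then have "k = 1" using kc by auto
          then show ?thesis using t \<open>s = 0\<close> by (simp add: f_def)
        qed
      qed (use t in \<open>auto simp: f_def\<close>)
    qed
  qed
  have contS: "continuous_on S f" unfolding SU
    using pE1 pE2 pE3 pK1 pK2 pK3
    by (intro continuous_on_closed_Un closed_Un compact_imp_closed; simp)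
  have cS: "compact S" unfolding SU using pE1 pE2 pE3 pK1 pK2 pK3 by (intro compact_Un; simp)
  obtain g where "homeomorphism S T f g" using homeomorphism_compact[OF cS contS img inj] by blast
  then have "S homeomorphic T" unfolding homeomorphic_def by blast
  then have "T homeomorphic S" using homeomorphic_sym by blast
  then show ?thesis unfolding T_def S_def by blast
qed


theorem lemma4p4:
  fixes X :: "'a::metric_space set" and I :: "'i set"
    and P :: "'i \<Rightarrow> (real \<times> real) set" and \<phi> :: "'i \<Rightarrow> real \<times> real \<Rightarrow> 'a"
    and x y z :: 'a and \<gamma>1 \<gamma>2 \<gamma>3 :: "real \<Rightarrow> 'a"
  assumes "euclidean_polygonal_complex X I P \<phi>" and "CAT0 X"
    and "x \<in> X" and "y \<in> X" and "z \<in> X"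
    and "geodesic_path X \<gamma>1 x y" and "geodesic_path X \<gamma>2 y z" and "geodesic_path X \<gamma>3 z x"
  shows "\<exists>a b c la lb lc. 0 \<le> la \<and> 0 \<le> lb \<and> 0 \<le> lc \<and>
           (\<gamma>1 ` {0..dist x y} \<union> \<gamma>2 ` {0..dist y z} \<union> \<gamma>3 ` {0..dist z x})
             homeomorphic spiky_triangle a b c la lb lc"
proof -
  have vp: "vfacts \<gamma>1 (dist x y) \<gamma>3 (dist z x) (br \<gamma>1 (dist x y) (\<lambda>t. \<gamma>3 (dist z x - t)) (dist z x))"
    by (rule vertex[OF assms(2) assms(6) assms(8)])
  have vq: "vfacts \<gamma>2 (dist y z) \<gamma>1 (dist x y) (br \<gamma>2 (dist y z) (\<lambda>t. \<gamma>1 (dist x y - t)) (dist x y))"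
    by (rule vertex[OF assms(2) assms(7) assms(6)])
  have vr: "vfacts \<gamma>3 (dist z x) \<gamma>2 (dist y z) (br \<gamma>3 (dist z x) (\<lambda>t. \<gamma>2 (dist y z - t)) (dist y z))"
    by (rule vertex[OF assms(2) assms(8) assms(7)])
  have i1: "\<forall>s\<in>{0..dist x y}. \<forall>t\<in>{0..dist x y}. dist (\<gamma>1 s) (\<gamma>1 t) = \<bar>s - t\<bar>"
    using assms(6) unfolding geodesic_path_def by blast
  have i2: "\<forall>s\<in>{0..dist y z}. \<forall>t\<in>{0..dist y z}. dist (\<gamma>2 s) (\<gamma>2 t) = \<bar>s - t\<bar>"
    using assms(7) unfolding geodesic_path_def by blast
  have i3: "\<forall>s\<in>{0..dist z x}. \<forall>t\<in>{0..dist z x}. dist (\<gamma>3 s) (\<gamma>3 t) = \<bar>s - t\<bar>"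
    using assms(8) unfolding geodesic_path_def by blast
  obtain a b c where H: "(\<gamma>1 ` {0..dist x y} \<union> \<gamma>2 ` {0..dist y z} \<union> \<gamma>3 ` {0..dist z x})
      homeomorphic spiky_triangle a b c (br \<gamma>1 (dist x y) (\<lambda>t. \<gamma>3 (dist z x - t)) (dist z x))
        (br \<gamma>2 (dist y z) (\<lambda>t. \<gamma>1 (dist x y - t)) (dist x y))
        (br \<gamma>3 (dist z x) (\<lambda>t. \<gamma>2 (dist y z - t)) (dist y z))"
    using main_homeo[OF i1 i2 i3 vp vq vr] by (elim exE) (rule that)
  have nn: "0 \<le> br \<gamma>1 (dist x y) (\<lambda>t. \<gamma>3 (dist z x - t)) (dist z x)"
    "0 \<le> br \<gamma>2 (dist y z) (\<lambda>t. \<gamma>1 (dist x y - t)) (dist x y)"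
    "0 \<le> br \<gamma>3 (dist z x) (\<lambda>t. \<gamma>2 (dist y z - t)) (dist y z)"
    using vp vq vr unfolding vfacts_def by (meson conjunct1)+
  show ?thesis
    apply (rule exI[of _ a], rule exI[of _ b], rule exI[of _ c])
    apply (rule exI[of _ "br \<gamma>1 (dist x y) (\<lambda>t. \<gamma>3 (dist z x - t)) (dist z x)"])
    apply (rule exI[of _ "br \<gamma>2 (dist y z) (\<lambda>t. \<gamma>1 (dist x y - t)) (dist x y)"])
    apply (rule exI[of _ "br \<gamma>3 (dist z x) (\<lambda>t. \<gamma>2 (dist y z - t)) (dist y z)"])
    using nn H by (intro conjI)
qed

end
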